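(* Let $c\ge 0$ be a budget. Consider the primal problem $$\max_{w,\lambda_2,\mu}\ \lambda_2\quad\text{s.t.}\quad \sum_{\{i,j\}\in E_3}w_{ij}L_{ij}+L_0+\mu\boldsymbol e\boldsymbol e^T-\lambda_2 I\succeq 0,\ \ \sum_{\{i,j\}\in E_3}w_{ij}=c,\ \ w_{ij}\ge 0,$$ and the dual problem $$\max_{\xi\in\mathbb{R},\,X\in\mathbb{R}^{n\times n}}\ c\xi-\langle X,L_0\rangle\quad\text{s.t.}\quad \langle X,I\rangle=1,\ \ \langle X,\boldsymbol e\boldsymbol e^T\rangle=0,\ \ \langle X,L_{ij}\rangle\le-\xi\ \ \forall\{i,j\}\in E_3,\ \ X\succeq 0.$$ Then strong duality holds (the two optimal values are equal and finite), and the dual problem attains its optimal value.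
   Context: A multiplex network consists of two layers $G_1=(V_1,E_1)$ and $G_2=(V_2,E_2)$, simple undirected graphs with $|V_1|=|V_2|=N$; the vertices of $G_1$ are numbered $1,\dots,N$ and those of $G_2$ are numbered $N+1,\dots,2N$, and $n=2N$. The interlayer edges form the perfect matching $E_3=\{\{i,N+i\}:i=1,\dots,N\}$, carrying nonnegative weights $w_{ij}$. For an edge $\{i,j\}$ let $L_{ij}=(\delta_i-\delta_j)(\delta_i-\delta_j)^T$, $\delta_i$ the $i$-th standard basis vector of $\mathbb{R}^n$. $L_0=\sum_{\{i,j\}\in E_1\cup E_2}L_{ij}$. $\boldsymbol e$ is the all-ones vector in $\mathbb{R}^n$, $\langle A,B\rangle=\operatorname{Tr}(A^TB)$. *)

theory Defs
  imports Complex_Main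
begin

text \<open>Real n-by-n matrices are represented as functions nat => nat => real,
  indexed by 1..n (only entries with indices in 1..n are relevant).\<close>

definition delta :: "nat \<Rightarrow> nat \<Rightarrow> real" where
  "delta i a = (if a = i then 1 else 0)"

definition Lij :: "nat \<Rightarrow> nat \<Rightarrow> nat \<Rightarrow> nat \<Rightarrow> real" where
  "Lij i j = (\<lambda>a b. (delta i a - delta j a) * (delta i b - delta j b))"

text \<open>Undirected edges {i,j} are stored as pairs (i,j) with i < j.\<close>
definition L0 :: "(nat \<times> nat) set \<Rightarrow> (nat \<times> nat) set \<Rightarrow> nat \<Rightarrow> nat \<Rightarrow> real" where
  "L0 E1 E2 = (\<lambda>a b. \<Sum>(i, j)\<in>E1 \<union> E2. Lij i j a b)"

definition ones_mat :: "nat \<Rightarrow> nat \<Rightarrow> real" where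
  "ones_mat = (\<lambda>a b. 1)"

definition id_mat :: "nat \<Rightarrow> nat \<Rightarrow> real" where
  "id_mat = (\<lambda>a b. if a = b then 1 else 0)"

definition inner_mat :: "nat \<Rightarrow> (nat \<Rightarrow> nat \<Rightarrow> real) \<Rightarrow> (nat \<Rightarrow> nat \<Rightarrow> real) \<Rightarrow> real" where
  "inner_mat n A B = (\<Sum>a\<in>{1..n}. \<Sum>b\<in>{1..n}. A a b * B a b)"

definition psd :: "nat \<Rightarrow> (nat \<Rightarrow> nat \<Rightarrow> real) \<Rightarrow> bool" where
  "psd n A \<longleftrightarrow> (\<forall>a\<in>{1..n}. \<forall>b\<in>{1..n}. A a b = A b a) \<and>
     (\<forall>x :: nat \<Rightarrow> real. 0 \<le> (\<Sum>a\<in>{1..n}. \<Sum>b\<in>{1..n}. x a * A a b * x b))"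

text \<open>Primal feasibility; w i is the weight of the interlayer edge {i, N+i}.\<close>
definition primal_feasible ::
  "nat \<Rightarrow> (nat \<times> nat) set \<Rightarrow> (nat \<times> nat) set \<Rightarrow> real \<Rightarrow> (nat \<Rightarrow> real) \<Rightarrow> real \<Rightarrow> real \<Rightarrow> bool" where
  "primal_feasible N E1 E2 c w lam mu \<longleftrightarrow>
     psd (2 * N) (\<lambda>a b. (\<Sum>i\<in>{1..N}. w i * Lij i (N + i) a b) + L0 E1 E2 a b
                        + mu * ones_mat a b - lam * id_mat a b) \<and>
     (\<Sum>i\<in>{1..N}. w i) = c \<and> (\<forall>i\<in>{1..N}. 0 \<le> w i)"

definition dual_feasible ::
  "nat \<Rightarrow> real \<Rightarrow> (nat \<Rightarrow> nat \<Rightarrow> real) \<Rightarrow> bool" where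
  "dual_feasible N xi X \<longleftrightarrow>
     inner_mat (2 * N) X id_mat = 1 \<and> inner_mat (2 * N) X ones_mat = 0 \<and>
     (\<forall>i\<in>{1..N}. inner_mat (2 * N) X (Lij i (N + i)) \<le> - xi) \<and> psd (2 * N) X"

definition dual_obj ::
  "nat \<Rightarrow> (nat \<times> nat) set \<Rightarrow> (nat \<times> nat) set \<Rightarrow> real \<Rightarrow> real \<Rightarrow> (nat \<Rightarrow> nat \<Rightarrow> real) \<Rightarrow> real" where
  "dual_obj N E1 E2 c xi X = c * xi - inner_mat (2 * N) X (L0 E1 E2)"

end

theory Submission
  imports Defs "HOL-Analysis.Analysis"
begin

definition qf :: "nat set \<Rightarrow> (nat\<Rightarrow>nat\<Rightarrow>real) \<Rightarrow> (nat\<Rightarrow>real) \<Rightarrow> real" where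
  "qf S A x = (\<Sum>a\<in>S. \<Sum>b\<in>S. x a * A a b * x b)"

definition psdS :: "nat set \<Rightarrow> (nat\<Rightarrow>nat\<Rightarrow>real) \<Rightarrow> bool" where
  "psdS S A \<longleftrightarrow> (\<forall>a\<in>S. \<forall>b\<in>S. A a b = A b a) \<and> (\<forall>x. 0 \<le> qf S A x)"

lemma psd_psdS: "psd n A = psdS {1..n} A"
  by (simp add: psd_def psdS_def qf_def)

lemma qf_restrict:
  assumes "finite T" "k \<notin> T"
  shows "qf T A y = qf (insert k T) A (y(k:=0))"
proof -
  have "qf (insert k T) A (y(k:=0)) = (\<Sum>a\<in>T. \<Sum>b\<in>insert k T. (y(k:=0)) a * A a b * (y(k:=0)) b)"
    using assms by (simp add: qf_def)
  also have "\<dots> = (\<Sum>a\<in>T. \<Sum>b\<in>T. (y(k:=0)) a * A a b * (y(k:=0)) b)"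
    using assms by simp
  also have "\<dots> = (\<Sum>a\<in>T. \<Sum>b\<in>T. y a * A a b * y b)"
    by (rule sum.cong[OF refl], rule sum.cong[OF refl]) (use assms(2) in auto)
  finally show ?thesis by (simp add: qf_def)
qed

lemma psdS_restrict:
  assumes "finite T" "k \<notin> T" "psdS (insert k T) A"
  shows "psdS T A"
  using assms qf_restrict[OF assms(1,2), of A] unfolding psdS_def by auto

lemma qf_expand:
  "qf S A (\<lambda>a. y a + t * e a) = qf S A y
     + t * ((\<Sum>a\<in>S. \<Sum>b\<in>S. y a * A a b * e b) + (\<Sum>a\<in>S. \<Sum>b\<in>S. e a * A a b * y b))
     + t^2 * qf S A e"
  by (simp add: qf_def algebra_simps sum.distrib sum_distrib_left power2_eq_square)

lemma quad_disc:
  fixes q B d :: real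
  assumes "\<And>t. 0 \<le> q + 2*t*B + t^2*d" and dpos: "0 \<le> d"
  shows "B^2 \<le> d*q"
proof -
  have q: "0 \<le> q" using assms(1)[of 0] by simp
  show ?thesis
  proof (cases "d = 0")
    case True
    show ?thesis
    proof (cases "B = 0")
      case False
      have "0 \<le> q + 2*(-(q+1)/(2*B))*B + (-(q+1)/(2*B))^2*d" by (rule assms)
      with True False show ?thesis by (simp add: field_simps)
    qed (use True in simp)
  next
    case False
    with dpos have dp: "d > 0" by simp
    have "0 \<le> q + 2*(-B/d)*B + (-B/d)^2*d" by (rule assms)
    hence "0 \<le> q - B^2/d" using dp by (simp add: power2_eq_square field_simps)
    hence "B^2/d \<le> q" by simp
    hence "B^2 \<le> q * d" using dp by (simp add: divide_le_eq)
    thus ?thesis by (simp add: mult.commute)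
  qed
qed

lemma sum_delta_l:
  assumes "k \<in> S" "finite S"
  shows "(\<Sum>b\<in>S. (if b = k then 1 else 0) * f b) = (f k :: real)"
proof -
  have "\<And>b. (if b = k then 1 else 0) * f b = (if b = k then f b else 0)" by simp
  thus ?thesis using assms by (simp add: sum.delta)
qed

lemma sum_delta_r:
  assumes "k \<in> S" "finite S"
  shows "(\<Sum>b\<in>S. f b * (if b = k then 1 else 0)) = (f k :: real)"
proof -
  have "\<And>b. f b * (if b = k then 1 else 0) = (if b = k then f b else 0)" by simp
  thus ?thesis using assms by (simp add: sum.delta)
qed

lemma delta_sum2:
  assumes "k \<in> S" "finite S"
  shows "(\<Sum>a\<in>S. \<Sum>b\<in>S. (if a = k then 1 else 0) * f a b) = (\<Sum>b\<in>S. f k b :: real)"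
proof -
  have "\<And>a. (\<Sum>b\<in>S. (if a = k then 1 else 0) * f a b) = (if a = k then (\<Sum>b\<in>S. f a b) else 0)" by simp
  thus ?thesis using assms by (simp add: sum.delta)
qed

lemma psd_row:
  assumes "psdS S X" "k \<in> S" "finite S"
  shows "(\<Sum>a\<in>S. y a * X a k)^2 \<le> X k k * qf S X y \<and> 0 \<le> X k k"
proof -
  define e where "e = (\<lambda>a. if a = k then (1::real) else 0)"
  define B where "B = (\<Sum>a\<in>S. y a * X a k)"
  have sym: "\<And>a b. a \<in> S \<Longrightarrow> b \<in> S \<Longrightarrow> X a b = X b a" using assms(1) by (simp add: psdS_def)
  have e1: "(\<Sum>a\<in>S. \<Sum>b\<in>S. y a * X a b * e b) = B"
    using assms(2,3) by (simp add: e_def B_def if_distrib sum.delta cong: if_cong)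
  have e2: "(\<Sum>a\<in>S. \<Sum>b\<in>S. e a * X a b * y b) = B"
  proof -
    have "(\<Sum>a\<in>S. \<Sum>b\<in>S. e a * X a b * y b) = (\<Sum>b\<in>S. X k b * y b)"
      using delta_sum2[OF assms(2,3), of "\<lambda>a b. X a b * y b"] by (simp add: e_def mult.assoc)
    also have "\<dots> = B" unfolding B_def using sym assms(2) by (auto intro!: sum.cong)
    finally show ?thesis .
  qed
  have e3: "qf S X e = X k k"
  proof -
    have "qf S X e = (\<Sum>b\<in>S. X k b * e b)"
    proof -
      have "qf S X e = (\<Sum>a\<in>S. \<Sum>b\<in>S. (if a = k then 1 else 0) * (X a b * e b))"
        unfolding qf_def by (rule sum.cong[OF refl], rule sum.cong[OF refl]) (simp add: e_def)
      thus ?thesis using delta_sum2[OF assms(2,3), of "\<lambda>a b. X a b * e b"] by simp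
    qed
    also have "\<dots> = X k k" unfolding e_def using sum_delta_r[OF assms(2,3)] by simp
    finally show ?thesis .
  qed
  have "\<And>t. 0 \<le> qf S X y + 2*t*B + t^2 * X k k"
  proof -
    fix t
    have "0 \<le> qf S X (\<lambda>a. y a + t * e a)" using assms(1) by (simp add: psdS_def)
    thus "0 \<le> qf S X y + 2*t*B + t^2 * X k k" using qf_expand[of S X y t e] e1 e2 e3 by simp
  qed
  moreover have "0 \<le> X k k" using assms(1) e3 by (metis psdS_def)
  ultimately show ?thesis using quad_disc by (simp add: B_def)
qed

lemma sum_zero_rowcol:
  assumes "finite T" "k \<notin> T" "\<And>a. a \<in> insert k T \<Longrightarrow> Y a k = 0 \<and> Y k a = 0"
  shows "(\<Sum>a\<in>insert k T. \<Sum>b\<in>insert k T. Y a b * M a b) = (\<Sum>a\<in>T. \<Sum>b\<in>T. Y a b * M a b :: real)"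
proof -
  have "Y k k = 0" "\<forall>b\<in>T. Y k b = 0" "\<forall>a\<in>T. Y a k = 0" using assms(3) by auto
  thus ?thesis using assms(1,2) by simp
qed

lemma trace_psd:
  assumes "finite S" "psdS S X" "\<And>x. 0 \<le> qf S M x"
  shows "0 \<le> (\<Sum>a\<in>S. \<Sum>b\<in>S. X a b * M a b)"
  using assms
proof (induction S arbitrary: X rule: finite_induct)
  case empty
  then show ?case by simp
next
  case (insert k T)
  let ?S = "insert k T"
  have symX: "\<And>a b. a \<in> ?S \<Longrightarrow> b \<in> ?S \<Longrightarrow> X a b = X b a" using insert.prems(1) unfolding psdS_def by blast
  have MT: "\<And>x. 0 \<le> qf T M x" using insert.prems(2) qf_restrict[OF insert.hyps(1,2), of M] by metis
  have d0: "0 \<le> X k k" using psd_row[OF insert.prems(1), of k] insert.hyps by simp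
  show ?case
  proof (cases "X k k = 0")
    case True
    have z: "X a k = 0 \<and> X k a = 0" if a: "a \<in> ?S" for a
    proof -
      have "(\<Sum>b\<in>?S. (\<lambda>c. if c = a then 1 else 0) b * X b k)^2 \<le> X k k * qf ?S X (\<lambda>c. if c = a then 1 else 0)"
        using psd_row[OF insert.prems(1), of k "\<lambda>c. if c = a then 1 else 0"] insert.hyps by blast
      hence "(X a k)^2 \<le> 0" using True sum_delta_l[OF a, of "\<lambda>b. X b k"] insert.hyps(1) by simp
      hence "X a k = 0" by simp
      thus ?thesis using symX[of a k] a by simp
    qed
    have "psdS T X" using psdS_restrict[OF insert.hyps(1,2) insert.prems(1)] .
    from insert.IH[OF this MT] show ?thesis using sum_zero_rowcol[OF insert.hyps(1,2), of X M] z by simp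
  next
    case False
    with d0 have dp: "X k k > 0" by simp
    define d where "d = X k k"
    define X' where "X' = (\<lambda>a b. X a b - X a k * X b k / d)"
    have z: "X' a k = 0 \<and> X' k a = 0" if a: "a \<in> ?S" for a
      using dp a symX[of a k] by (simp add: X'_def d_def)
    have psdX': "psdS ?S X'"
      unfolding psdS_def
    proof (intro conjI ballI allI)
      fix a b assume ab: "a \<in> ?S" "b \<in> ?S"
      show "X' a b = X' b a" using symX[OF ab] by (simp add: X'_def)
    next
      fix y
      define B where "B = (\<Sum>a\<in>?S. y a * X a k)"
      have "qf ?S X' y = qf ?S X y - (\<Sum>a\<in>?S. \<Sum>b\<in>?S. y a * (X a k * X b k / d) * y b)"
        by (simp add: qf_def X'_def algebra_simps sum_subtractf)
      also have "(\<Sum>a\<in>?S. \<Sum>b\<in>?S. y a * (X a k * X b k / d) * y b) = B^2 / d"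
        by (simp add: B_def power2_eq_square sum_product sum_divide_distrib algebra_simps)
      finally have "qf ?S X' y = qf ?S X y - B^2/d" .
      moreover have "B^2 \<le> d * qf ?S X y" using psd_row[OF insert.prems(1), of k y] insert.hyps by (simp add: B_def d_def)
      ultimately have "0 \<le> d * qf ?S X' y" using dp by (simp add: d_def field_simps)
      thus "0 \<le> qf ?S X' y" using dp by (simp add: d_def zero_le_mult_iff)
    qed
    have "psdS T X'" using psdS_restrict[OF insert.hyps(1,2) psdX'] .
    from insert.IH[OF this MT] have ih: "0 \<le> (\<Sum>a\<in>?S. \<Sum>b\<in>?S. X' a b * M a b)"
      using sum_zero_rowcol[OF insert.hyps(1,2), of X' M] z by simp
    have "(\<Sum>a\<in>?S. \<Sum>b\<in>?S. X a b * M a b) = (\<Sum>a\<in>?S. \<Sum>b\<in>?S. X' a b * M a b) + qf ?S M (\<lambda>a. X a k) / d"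
      by (simp add: X'_def qf_def algebra_simps sum.distrib sum_subtractf sum_divide_distrib)
    moreover have "0 \<le> qf ?S M (\<lambda>a. X a k) / d" using insert.prems(2) dp by (simp add: d_def)
    ultimately show ?thesis using ih by simp
  qed
qed


lemma Lij_sym: "Lij i j a b = Lij i j b a"
  by (simp add: Lij_def)

lemma L0_sym: "L0 E1 E2 a b = L0 E1 E2 b a"
  by (simp add: L0_def Lij_sym)

lemma delta_double:
  assumes "i \<in> {1..n}" "j \<in> {1..n}"
  shows "(\<Sum>a\<in>{1..n}. \<Sum>b\<in>{1..n}. delta i a * (delta j b * X a b)) = X i j"
proof -
  have "\<And>a. (\<Sum>b\<in>{1..n}. delta i a * (delta j b * X a b)) = (if a = i then 1 else 0) * X a j"
    using sum_delta_l[OF assms(2), of "\<lambda>b. X _ b"] by (simp add: delta_def sum_distrib_left[symmetric])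
  thus ?thesis using sum_delta_l[OF assms(1), of "\<lambda>a. X a j"] by simp
qed

lemma inner_Lij:
  assumes "i \<in> {1..n}" "j \<in> {1..n}"
  shows "inner_mat n X (Lij i j) = X i i - X i j - X j i + X j j"
proof -
  have "inner_mat n X (Lij i j) = (\<Sum>a\<in>{1..n}. \<Sum>b\<in>{1..n}.
     delta i a * (delta i b * X a b) - delta i a * (delta j b * X a b)
     - delta j a * (delta i b * X a b) + delta j a * (delta j b * X a b))"
    unfolding inner_mat_def Lij_def by (simp add: algebra_simps)
  also have "\<dots> = X i i - X i j - X j i + X j j"
    using delta_double[OF assms(1) assms(1), of X] delta_double[OF assms(1) assms(2), of X]
      delta_double[OF assms(2) assms(1), of X] delta_double[OF assms(2) assms(2), of X]
    by (simp add: sum.distrib sum_subtractf)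
  finally show ?thesis .
qed

lemma qf_inner: "qf {1..n} A x = inner_mat n (\<lambda>a b. x a * x b) A"
  by (simp add: qf_def inner_mat_def algebra_simps)

lemma qf_Lij:
  assumes "i \<in> {1..n}" "j \<in> {1..n}"
  shows "qf {1..n} (Lij i j) x = (x i - x j)^2"
  unfolding qf_inner using inner_Lij[OF assms, of "\<lambda>a b. x a * x b"] by (simp add: power2_eq_square algebra_simps)

lemma inner_sum: "finite I \<Longrightarrow> inner_mat n X (\<lambda>a b. \<Sum>i\<in>I. f i a b) = (\<Sum>i\<in>I. inner_mat n X (f i))"
proof -
  assume fin: "finite I"
  have "inner_mat n X (\<lambda>a b. \<Sum>i\<in>I. f i a b) = (\<Sum>a\<in>{1..n}. \<Sum>b\<in>{1..n}. \<Sum>i\<in>I. X a b * f i a b)"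
    unfolding inner_mat_def by (simp add: sum_distrib_left)
  also have "\<dots> = (\<Sum>a\<in>{1..n}. \<Sum>i\<in>I. \<Sum>b\<in>{1..n}. X a b * f i a b)"
    by (rule sum.cong[OF refl], rule sum.swap)
  also have "\<dots> = (\<Sum>i\<in>I. \<Sum>a\<in>{1..n}. \<Sum>b\<in>{1..n}. X a b * f i a b)"
    by (rule sum.swap)
  finally show ?thesis by (simp add: inner_mat_def)
qed


lemma inner_add: "inner_mat n X (\<lambda>a b. A a b + B a b) = inner_mat n X A + inner_mat n X B"
  by (simp add: inner_mat_def algebra_simps sum.distrib)

lemma inner_diff: "inner_mat n X (\<lambda>a b. A a b - B a b) = inner_mat n X A - inner_mat n X B"
  by (simp add: inner_mat_def algebra_simps sum_subtractf)

lemma inner_scale: "inner_mat n X (\<lambda>a b. r * A a b) = r * inner_mat n X A"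
  by (simp add: inner_mat_def algebra_simps sum_distrib_left)

lemma inner_sum_w: "finite I \<Longrightarrow> inner_mat n X (\<lambda>a b. \<Sum>i\<in>I. w i * f i a b) = (\<Sum>i\<in>I. w i * inner_mat n X (f i))"
  using inner_sum[of I n X "\<lambda>i a b. w i * f i a b"] by (simp add: inner_scale)

lemma inner_conv: "inner_mat n (\<lambda>a b. X a b + t * (Y a b - X a b)) A = inner_mat n X A + t * (inner_mat n Y A - inner_mat n X A)"
  by (simp add: inner_mat_def algebra_simps sum.distrib sum_subtractf sum_distrib_left)

lemma weak_duality:
  assumes "primal_feasible N E1 E2 c w lam mu" "dual_feasible N xi X"
  shows "lam \<le> - dual_obj N E1 E2 c xi X"
proof -
  define M where "M = (\<lambda>a b. (\<Sum>i\<in>{1..N}. w i * Lij i (N + i) a b) + L0 E1 E2 a b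
                        + mu * ones_mat a b - lam * id_mat a b)"
  have pM: "psd (2*N) M" using assms(1) by (simp add: primal_feasible_def M_def)
  have pX: "psdS {1..2*N} X" using assms(2) by (simp add: dual_feasible_def psd_psdS)
  have "0 \<le> inner_mat (2*N) X M"
    using trace_psd[OF _ pX, of M] pM unfolding inner_mat_def psd_def qf_def by simp
  also have "inner_mat (2*N) X M = (\<Sum>i\<in>{1..N}. w i * inner_mat (2*N) X (Lij i (N + i)))
     + inner_mat (2*N) X (L0 E1 E2) + mu * inner_mat (2*N) X ones_mat - lam * inner_mat (2*N) X id_mat"
    unfolding M_def by (simp add: inner_add inner_diff inner_scale inner_sum_w)
  finally have "0 \<le> (\<Sum>i\<in>{1..N}. w i * inner_mat (2*N) X (Lij i (N + i)))
     + inner_mat (2*N) X (L0 E1 E2) - lam"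
    using assms(2) by (simp add: dual_feasible_def)
  moreover have "(\<Sum>i\<in>{1..N}. w i * inner_mat (2*N) X (Lij i (N + i))) \<le> (\<Sum>i\<in>{1..N}. w i * (-xi))"
    using assms by (intro sum_mono mult_left_mono) (auto simp: primal_feasible_def dual_feasible_def)
  moreover have "(\<Sum>i\<in>{1..N}. w i * (-xi)) = - xi * c"
  proof -
    have "(\<Sum>i\<in>{1..N}. w i * (-xi)) = (\<Sum>i\<in>{1..N}. w i) * (-xi)" by (rule sum_distrib_right[symmetric])
    thus ?thesis using assms(1) by (simp add: primal_feasible_def)
  qed
  ultimately show ?thesis by (simp add: dual_obj_def algebra_simps)
qed

definition Kset :: "nat \<Rightarrow> (nat\<Rightarrow>nat\<Rightarrow>real) set" where
  "Kset n = {X. (\<forall>a b. X a b \<in> {-1..1}) \<and> (\<forall>a b. (a \<notin> {1..n} \<or> b \<notin> {1..n}) \<longrightarrow> X a b = 0)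
     \<and> inner_mat n X id_mat = 1 \<and> inner_mat n X ones_mat = 0 \<and> psd n X}"

definition RK :: "nat \<Rightarrow> (nat \<Rightarrow> real) \<Rightarrow> nat \<Rightarrow> nat \<Rightarrow> real" where
  "RK n y = (\<lambda>a b. if a \<in> {1..n} \<and> b \<in> {1..n} then y a * y b / (\<Sum>c\<in>{1..n}. (y c)^2) else 0)"

lemma inner_id: "inner_mat n X id_mat = (\<Sum>a\<in>{1..n}. X a a)"
proof -
  have "\<And>a. a \<in> {1..n} \<Longrightarrow> (\<Sum>b\<in>{1..n}. X a b * id_mat a b) = X a a"
  proof -
    fix a assume a: "a \<in> {1..n}"
    have "(\<Sum>b\<in>{1..n}. X a b * id_mat a b) = (\<Sum>b\<in>{1..n}. X a b * (if b = a then 1 else 0))"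
      by (rule sum.cong) (auto simp: id_mat_def)
    also have "\<dots> = X a a" using sum_delta_r[OF a] by simp
    finally show "(\<Sum>b\<in>{1..n}. X a b * id_mat a b) = X a a" .
  qed
  thus ?thesis unfolding inner_mat_def by (rule sum.cong[OF refl])
qed

lemma inner_ones: "inner_mat n X ones_mat = (\<Sum>a\<in>{1..n}. \<Sum>b\<in>{1..n}. X a b)"
  by (simp add: inner_mat_def ones_mat_def)

lemma inner_RK: "inner_mat n (RK n y) A = qf {1..n} A y / (\<Sum>c\<in>{1..n}. (y c)^2)"
proof -
  have "inner_mat n (RK n y) A = (\<Sum>a\<in>{1..n}. \<Sum>b\<in>{1..n}. y a * y b / (\<Sum>c\<in>{1..n}. (y c)^2) * A a b)"
    unfolding inner_mat_def RK_def by (rule sum.cong[OF refl], rule sum.cong[OF refl]) simp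
  thus ?thesis by (simp add: qf_def sum_divide_distrib algebra_simps)
qed

lemma RK_in:
  assumes s0: "(\<Sum>a\<in>{1..n}. y a) = 0" and sp: "(\<Sum>a\<in>{1..n}. (y a)^2) > 0"
  shows "RK n y \<in> Kset n"
proof -
  define ss where "ss = (\<Sum>a\<in>{1..n}. (y a)^2)"
  have ssp: "ss > 0" using sp by (simp add: ss_def)
  have le: "(y a)^2 \<le> ss" if "a \<in> {1..n}" for a
    unfolding ss_def by (rule member_le_sum) (use that in auto)
  have box: "RK n y a b \<in> {-1..1}" for a b
  proof (cases "a \<in> {1..n} \<and> b \<in> {1..n}")
    case True
    have "2 * \<bar>y a\<bar> * \<bar>y b\<bar> \<le> \<bar>y a\<bar>^2 + \<bar>y b\<bar>^2" by (rule sum_squares_bound)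
    hence "2 * \<bar>y a * y b\<bar> \<le> (y a)^2 + (y b)^2" by (simp add: abs_mult)
    also have "\<dots> \<le> 2 * ss" using le[of a] le[of b] True by linarith
    finally have "\<bar>y a * y b\<bar> \<le> ss" by simp
    hence h: "-ss \<le> y a * y b" "y a * y b \<le> ss" by linarith+
    have "-1 \<le> y a * y b / ss" using h ssp by (simp add: le_divide_eq)
    moreover have "y a * y b / ss \<le> 1" using h ssp by (simp add: divide_le_eq)
    moreover have "RK n y a b = y a * y b / ss" using True by (simp add: RK_def ss_def)
    ultimately show ?thesis by simp
  next
    case False
    have "RK n y a b = 0" unfolding RK_def using False by (rule if_not_P)
    thus ?thesis by simp
  qed
  have tr: "inner_mat n (RK n y) id_mat = 1"
  proof -
    have q: "qf {1..n} id_mat y = ss" unfolding qf_inner inner_id by (simp add: ss_def power2_eq_square)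
    have "inner_mat n (RK n y) id_mat = qf {1..n} id_mat y / ss" unfolding ss_def by (rule inner_RK)
    thus ?thesis using q ssp by simp
  qed
  have on: "inner_mat n (RK n y) ones_mat = 0"
  proof -
    have "qf {1..n} ones_mat y = (\<Sum>a\<in>{1..n}. y a) * (\<Sum>b\<in>{1..n}. y b)"
      by (simp add: qf_def ones_mat_def sum_product)
    thus ?thesis using inner_RK[of n y ones_mat] s0 by simp
  qed
  have ps: "psd n (RK n y)"
    unfolding psd_def
  proof (intro conjI ballI allI)
    fix a b show "RK n y a b = RK n y b a" unfolding RK_def by (auto simp: mult.commute)
  next
    fix x :: "nat \<Rightarrow> real"
    have "(\<Sum>a\<in>{1..n}. \<Sum>b\<in>{1..n}. x a * RK n y a b * x b)
        = (\<Sum>a\<in>{1..n}. \<Sum>b\<in>{1..n}. (x a * y a) * (x b * y b) / ss)"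
      unfolding RK_def ss_def by (rule sum.cong[OF refl], rule sum.cong[OF refl]) (simp add: algebra_simps)
    also have "\<dots> = (\<Sum>a\<in>{1..n}. x a * y a)^2 / ss"
      by (simp add: power2_eq_square sum_product sum_divide_distrib)
    finally show "0 \<le> (\<Sum>a\<in>{1..n}. \<Sum>b\<in>{1..n}. x a * RK n y a b * x b)" using ssp by simp
  qed
  have zero: "\<forall>a b. (a \<notin> {1..n} \<or> b \<notin> {1..n}) \<longrightarrow> RK n y a b = 0" by (simp add: RK_def)
  show ?thesis unfolding Kset_def mem_Collect_eq using box tr on ps zero by blast
qed

lemma cont_entry: "continuous_on S (\<lambda>X::nat\<Rightarrow>nat\<Rightarrow>real. X a b)"
proof -
  have "continuous_on UNIV (\<lambda>X::nat\<Rightarrow>nat\<Rightarrow>real. X a)" by simp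
  moreover have "continuous_on UNIV (\<lambda>Y::nat\<Rightarrow>real. Y b)" by simp
  ultimately have "continuous_on UNIV (\<lambda>X::nat\<Rightarrow>nat\<Rightarrow>real. (X a) b)"
    using continuous_on_compose2[of UNIV "\<lambda>Y::nat\<Rightarrow>real. Y b" UNIV "\<lambda>X::nat\<Rightarrow>nat\<Rightarrow>real. X a"] by auto
  then show ?thesis by (auto intro: continuous_on_subset)
qed

lemma compact_box: "compact {X::nat\<Rightarrow>nat\<Rightarrow>real. \<forall>a b. X a b \<in> {-1..1}}"
proof -
  have c1: "compact (PiE (UNIV::nat set) (\<lambda>_. {-1..1::real}))"
    using compactin_PiE[of "\<lambda>_. euclidean" UNIV "\<lambda>_. {-1..1::real}"]
    by (simp add: euclidean_product_topology)
  have "compact (PiE (UNIV::nat set) (\<lambda>_. PiE (UNIV::nat set) (\<lambda>_. {-1..1::real})))"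
    using compactin_PiE[of "\<lambda>_. euclidean" UNIV "\<lambda>_. PiE (UNIV::nat set) (\<lambda>_. {-1..1::real})"] c1
    by (simp add: euclidean_product_topology)
  moreover have "PiE (UNIV::nat set) (\<lambda>_. PiE (UNIV::nat set) (\<lambda>_. {-1..1::real})) = {X::nat\<Rightarrow>nat\<Rightarrow>real. \<forall>a b. X a b \<in> {-1..1}}"
    by (auto simp: PiE_def Pi_def)
  ultimately show ?thesis by simp
qed

lemma cont_inner: "continuous_on S (\<lambda>X. inner_mat n X A)"
  unfolding inner_mat_def by (intro continuous_intros cont_entry)

lemma compact_Kset: "compact (Kset n)"
proof -
  have c1: "closed {X::nat\<Rightarrow>nat\<Rightarrow>real. \<forall>a b. (a \<notin> {1..n} \<or> b \<notin> {1..n}) \<longrightarrow> X a b = 0}"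
  proof (intro closed_Collect_all)
    fix a b
    show "closed {X::nat\<Rightarrow>nat\<Rightarrow>real. (a \<notin> {1..n} \<or> b \<notin> {1..n}) \<longrightarrow> X a b = 0}"
    proof (cases "a \<notin> {1..n} \<or> b \<notin> {1..n}")
      case True
      have "closed {X::nat\<Rightarrow>nat\<Rightarrow>real. X a b = 0}"
        by (rule closed_Collect_eq) (auto intro: cont_entry)
      then show ?thesis using True by simp
    next
      case False
      then show ?thesis by simp
    qed
  qed
  have c2: "closed {X::nat\<Rightarrow>nat\<Rightarrow>real. inner_mat n X id_mat = 1}"
    by (rule closed_Collect_eq) (auto intro: cont_inner)
  have c3: "closed {X::nat\<Rightarrow>nat\<Rightarrow>real. inner_mat n X ones_mat = 0}"
    by (rule closed_Collect_eq) (auto intro: cont_inner)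
  have c4: "closed {X::nat\<Rightarrow>nat\<Rightarrow>real. psd n X}"
  proof -
    have e: "{X::nat\<Rightarrow>nat\<Rightarrow>real. psd n X} = (\<Inter>a\<in>{1..n}. \<Inter>b\<in>{1..n}. {X. X a b = X b a})
       \<inter> (\<Inter>x. {X. 0 \<le> (\<Sum>a\<in>{1..n}. \<Sum>b\<in>{1..n}. x a * X a b * x b)})"
      unfolding psd_def by blast
    have s1: "closed {X::nat\<Rightarrow>nat\<Rightarrow>real. X a b = X b a}" for a b
      by (rule closed_Collect_eq) (auto intro: cont_entry)
    have s2: "closed {X::nat\<Rightarrow>nat\<Rightarrow>real. 0 \<le> (\<Sum>a\<in>{1..n}. \<Sum>b\<in>{1..n}. x a * X a b * x b)}" for x :: "nat \<Rightarrow> real"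
      by (rule closed_Collect_le) (auto intro!: continuous_intros cont_entry)
    show ?thesis unfolding e using s1 s2 by (intro closed_Int closed_INT ballI) auto
  qed
  have "Kset n = {X::nat\<Rightarrow>nat\<Rightarrow>real. \<forall>a b. X a b \<in> {-1..1}} \<inter>
     ({X. \<forall>a b. (a \<notin> {1..n} \<or> b \<notin> {1..n}) \<longrightarrow> X a b = 0} \<inter> {X. inner_mat n X id_mat = 1}
       \<inter> {X. inner_mat n X ones_mat = 0} \<inter> {X. psd n X})"
    unfolding Kset_def by blast
  moreover have "closed ({X::nat\<Rightarrow>nat\<Rightarrow>real. \<forall>a b. (a \<notin> {1..n} \<or> b \<notin> {1..n}) \<longrightarrow> X a b = 0} \<inter> {X. inner_mat n X id_mat = 1}
       \<inter> {X. inner_mat n X ones_mat = 0} \<inter> {X. psd n X})"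
    using c1 c2 c3 c4 by (intro closed_Int)
  ultimately show ?thesis using compact_box by (simp add: compact_Int_closed)
qed

lemma Kset_conv:
  assumes "X \<in> Kset n" "Y \<in> Kset n" "0 \<le> t" "t \<le> 1"
  shows "(\<lambda>a b. X a b + t * (Y a b - X a b)) \<in> Kset n"
proof -
  let ?Z = "\<lambda>a b. X a b + t * (Y a b - X a b)"
  have box: "?Z a b \<in> {-1..1}" for a b
  proof -
    have "X a b \<in> {-1..1}" "Y a b \<in> {-1..1}" using assms(1,2) by (auto simp: Kset_def)
    hence "(1-t) * X a b \<le> (1-t) * 1" "t * Y a b \<le> t * 1" "(1-t) * (-1) \<le> (1-t) * X a b" "t * (-1) \<le> t * Y a b"
      using assms(3,4) mult_left_mono[of "X a b" 1 "1-t"] mult_left_mono[of "Y a b" 1 t]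
        mult_left_mono[of "-1" "X a b" "1-t"] mult_left_mono[of "-1" "Y a b" t] by auto
    hence "-1 \<le> (1-t) * X a b + t * Y a b \<and> (1-t) * X a b + t * Y a b \<le> 1" by (smt (verit))
    thus ?thesis by (simp add: algebra_simps)
  qed
  have ps: "psd n ?Z"
    unfolding psd_def
  proof (intro conjI ballI allI)
    fix a b assume "a \<in> {1..n}" "b \<in> {1..n}"
    thus "?Z a b = ?Z b a" using assms(1,2) by (simp add: Kset_def psd_def)
  next
    fix x :: "nat \<Rightarrow> real"
    have "(\<Sum>a\<in>{1..n}. \<Sum>b\<in>{1..n}. x a * ?Z a b * x b) = (1-t) * qf {1..n} X x + t * qf {1..n} Y x"
      by (simp add: qf_def algebra_simps sum.distrib sum_subtractf sum_distrib_left)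
    moreover have "0 \<le> qf {1..n} X x" "0 \<le> qf {1..n} Y x" using assms(1,2) by (auto simp: Kset_def psd_psdS psdS_def)
    ultimately show "0 \<le> (\<Sum>a\<in>{1..n}. \<Sum>b\<in>{1..n}. x a * ?Z a b * x b)" using assms(3,4) by simp
  qed
  show ?thesis unfolding Kset_def using box ps assms(1,2) by (simp add: inner_conv Kset_def)
qed

lemma descent:
  fixes u h :: real
  shows "(max 0 (u+h))^2 \<le> (max 0 u)^2 + 2*(max 0 u)*h + h^2"
proof (cases "u \<le> 0")
  case True
  show ?thesis
  proof (cases "u + h \<le> 0")
    case True
    then show ?thesis using \<open>u \<le> 0\<close> by simp
  next
    case False
    hence "0 \<le> u + h" "u + h \<le> h" using \<open>u \<le> 0\<close> by auto
    hence "(u+h)^2 \<le> h^2" by (intro power_mono) auto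
    then show ?thesis using False \<open>u \<le> 0\<close> by simp
  qed
next
  case False
  show ?thesis
  proof (cases "u + h \<le> 0")
    case True
    have "(max 0 u)^2 + 2*(max 0 u)*h + h^2 = (u+h)^2" using False by (simp add: power2_eq_square algebra_simps)
    moreover have "(max 0 (u+h))^2 = 0" using True by simp
    ultimately show ?thesis by simp
  next
    case True2: False
    have "(max 0 u)^2 + 2*(max 0 u)*h + h^2 = (u+h)^2" using False by (simp add: power2_eq_square algebra_simps)
    moreover have "(max 0 (u+h))^2 = (u+h)^2" using True2 by simp
    ultimately show ?thesis by simp
  qed
qed


lemma minimax_step:
  fixes K :: "(nat\<Rightarrow>nat\<Rightarrow>real) set" and G :: "nat \<Rightarrow> (nat\<Rightarrow>nat\<Rightarrow>real) \<Rightarrow> real" and I :: "nat set"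
  assumes fin: "finite I" and Kc: "compact K" and Kne: "K \<noteq> {}"
    and conv: "\<And>X Y t. X \<in> K \<Longrightarrow> Y \<in> K \<Longrightarrow> 0 \<le> t \<Longrightarrow> t \<le> 1 \<Longrightarrow> (\<lambda>a b. X a b + t*(Y a b - X a b)) \<in> K"
    and lin: "\<And>i X Y t. G i (\<lambda>a b. X a b + t*(Y a b - X a b)) = G i X + t*(G i Y - G i X)"
    and cont: "\<And>i. continuous_on K (G i)"
    and lb: "\<And>X. X \<in> K \<Longrightarrow> \<exists>i\<in>I. v \<le> G i X"
    and ep: "\<epsilon> > 0"
  shows "\<exists>a. (\<forall>i\<in>I. 0 \<le> a i) \<and> (\<Sum>i\<in>I. a i) = 1 \<and> (\<forall>X\<in>K. v - \<epsilon> \<le> (\<Sum>i\<in>I. a i * G i X))"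
proof -
  define q where "q = v - \<epsilon>"
  define F where "F X = (\<Sum>i\<in>I. (max 0 (G i X - q))^2)" for X
  have "continuous_on K F" unfolding F_def by (intro continuous_intros cont)
  then obtain X0 where X0: "X0 \<in> K" "\<forall>Y\<in>K. F X0 \<le> F Y"
    using continuous_attains_inf[OF Kc Kne] by blast
  define a0 where "a0 i = max 0 (G i X0 - q)" for i
  obtain i0 where i0: "i0 \<in> I" "v \<le> G i0 X0" using lb[OF X0(1)] by blast
  have a0pos: "a0 i0 > 0" using i0 ep by (simp add: a0_def q_def)
  have a0nn: "\<And>i. 0 \<le> a0 i" by (simp add: a0_def)
  define A where "A = (\<Sum>i\<in>I. a0 i)"
  have "a0 i0 \<le> A" unfolding A_def by (rule member_le_sum) (use i0 fin a0nn in auto)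
  hence Apos: "A > 0" using a0pos by simp
  have key: "(\<Sum>i\<in>I. a0 i * G i X0) \<le> (\<Sum>i\<in>I. a0 i * G i Y)" if Y: "Y \<in> K" for Y
  proof -
    define d where "d i = G i Y - G i X0" for i
    define D where "D = (\<Sum>i\<in>I. a0 i * d i)"
    define E where "E = (\<Sum>i\<in>I. (d i)^2)"
    have E0: "0 \<le> E" by (simp add: E_def sum_nonneg)
    have step: "0 \<le> 2*D + t*E" if t: "0 < t" "t \<le> 1" for t
    proof -
      let ?Xt = "\<lambda>a b. X0 a b + t*(Y a b - X0 a b)"
      have "?Xt \<in> K" using conv X0(1) Y t by simp
      hence "F X0 \<le> F ?Xt" using X0(2) by blast
      also have "F ?Xt = (\<Sum>i\<in>I. (max 0 ((G i X0 - q) + t * d i))^2)"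
        unfolding F_def lin d_def by (simp add: algebra_simps)
      also have "\<dots> \<le> (\<Sum>i\<in>I. (a0 i)^2 + 2*(a0 i)*(t*d i) + (t*d i)^2)"
        unfolding a0_def by (rule sum_mono) (rule descent)
      also have "\<dots> = F X0 + 2*t*D + t^2*E"
        by (simp add: F_def a0_def D_def E_def sum.distrib sum_distrib_left power_mult_distrib algebra_simps)
      finally have "0 \<le> t * (2*D + t*E)" by (simp add: power2_eq_square algebra_simps)
      thus ?thesis using t by (simp add: zero_le_mult_iff)
    qed
    have "0 \<le> D"
    proof (rule ccontr)
      assume nD: "\<not> 0 \<le> D"
      define t where "t = min 1 (-D/(E+1))"
      have "0 < -D/(E+1)" using nD E0 by (intro divide_pos_pos) auto
      hence tpos: "0 < t" by (simp add: t_def)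
      have t1: "t \<le> 1" by (simp add: t_def)
      have "t \<le> -D/(E+1)" by (simp add: t_def)
      hence "t * E \<le> (-D/(E+1)) * E" using E0 by (rule mult_right_mono)
      also have "(-D/(E+1)) * E = -D * (E/(E+1))" by simp
      also have "\<dots> < -D * 1"
        using nD E0 by (intro mult_strict_left_mono) (auto simp: divide_less_eq)
      finally have "2*D + t*E < D" by simp
      with step[OF tpos t1] nD show False by simp
    qed
    thus ?thesis unfolding D_def d_def by (simp add: algebra_simps sum_subtractf)
  qed
  have base: "q * A \<le> (\<Sum>i\<in>I. a0 i * G i X0)"
  proof -
    have "q * A = (\<Sum>i\<in>I. a0 i * q)" by (simp add: A_def sum_distrib_left mult.commute)
    also have "\<dots> \<le> (\<Sum>i\<in>I. a0 i * G i X0)"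
    proof (rule sum_mono)
      fix i assume "i \<in> I"
      show "a0 i * q \<le> a0 i * G i X0"
      proof (cases "G i X0 - q > 0")
        case True
        then show ?thesis using a0nn[of i] by (intro mult_left_mono) auto
      next
        case False
        then show ?thesis by (simp add: a0_def)
      qed
    qed
    finally show ?thesis .
  qed
  define a where "a i = a0 i / A" for i
  show ?thesis
  proof (intro exI conjI ballI)
    fix i show "0 \<le> a i" using a0nn Apos by (simp add: a_def)
  next
    show "(\<Sum>i\<in>I. a i) = 1" using Apos by (simp add: a_def A_def[symmetric] sum_divide_distrib[symmetric])
  next
    fix X assume X: "X \<in> K"
    have "(\<Sum>i\<in>I. a i * G i X) = (\<Sum>i\<in>I. a0 i * G i X) / A"
      by (simp add: a_def sum_divide_distrib)
    moreover have "q * A \<le> (\<Sum>i\<in>I. a0 i * G i X)" using base key[OF X] by linarith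
    ultimately show "v - \<epsilon> \<le> (\<Sum>i\<in>I. a i * G i X)" using Apos by (simp add: q_def le_divide_eq)
  qed
qed

lemma cont_Max:
  fixes f :: "'i \<Rightarrow> 'a::topological_space \<Rightarrow> real"
  assumes "finite I" "I \<noteq> {}" "\<And>i. continuous_on S (f i)"
  shows "continuous_on S (\<lambda>X. Max ((\<lambda>i. f i X) ` I))"
  using assms(1,2)
proof (induction I rule: finite_ne_induct)
  case (singleton x)
  then show ?case using assms(3) by simp
next
  case (insert x F)
  have e: "(\<lambda>X. Max ((\<lambda>i. f i X) ` insert x F)) = (\<lambda>X. max (f x X) (Max ((\<lambda>i. f i X) ` F)))"
    using insert.hyps by (simp add: Max_insert)
  have "continuous_on S (\<lambda>X. max (f x X) (Max ((\<lambda>i. f i X) ` F)))"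
    using insert.IH assms(3) by (intro continuous_on_max) auto
  then show ?case by (subst e)
qed

lemma inner_L0:
  assumes "finite (E1 \<union> E2)"
  shows "inner_mat n X (L0 E1 E2) = (\<Sum>p\<in>E1 \<union> E2. inner_mat n X (Lij (fst p) (snd p)))"
proof -
  have "L0 E1 E2 = (\<lambda>a b. \<Sum>p\<in>E1 \<union> E2. Lij (fst p) (snd p) a b)" by (simp add: L0_def split_def)
  thus ?thesis using inner_sum[OF assms, of n X "\<lambda>p a b. Lij (fst p) (snd p) a b"] by simp
qed

definition Aw :: "nat \<Rightarrow> (nat \<times> nat) set \<Rightarrow> (nat \<times> nat) set \<Rightarrow> (nat \<Rightarrow> real) \<Rightarrow> nat \<Rightarrow> nat \<Rightarrow> real" where
  "Aw N E1 E2 w = (\<lambda>a b. (\<Sum>i\<in>{1..N}. w i * Lij i (N + i) a b) + L0 E1 E2 a b)"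

lemma inner_Aw:
  assumes "finite (E1 \<union> E2)"
  shows "inner_mat n X (Aw N E1 E2 w) = (\<Sum>i\<in>{1..N}. w i * inner_mat n X (Lij i (N + i)))
     + (\<Sum>p\<in>E1 \<union> E2. inner_mat n X (Lij (fst p) (snd p)))"
  unfolding Aw_def by (simp add: inner_add inner_sum_w inner_L0[OF assms])

lemma qf_Aw:
  assumes fin: "finite (E1 \<union> E2)" and hE: "\<forall>p\<in>E1 \<union> E2. fst p \<in> {1..2*N} \<and> snd p \<in> {1..2*N}"
  shows "qf {1..2*N} (Aw N E1 E2 w) x = (\<Sum>i\<in>{1..N}. w i * (x i - x (N + i))^2)
     + (\<Sum>p\<in>E1 \<union> E2. (x (fst p) - x (snd p))^2)"
proof -
  have "qf {1..2*N} (Aw N E1 E2 w) x = (\<Sum>i\<in>{1..N}. w i * qf {1..2*N} (Lij i (N + i)) x)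
     + (\<Sum>p\<in>E1 \<union> E2. qf {1..2*N} (Lij (fst p) (snd p)) x)"
    unfolding qf_inner inner_Aw[OF fin] ..
  also have "(\<Sum>i\<in>{1..N}. w i * qf {1..2*N} (Lij i (N + i)) x) = (\<Sum>i\<in>{1..N}. w i * (x i - x (N + i))^2)"
    by (rule sum.cong[OF refl]) (subst qf_Lij, auto)
  also have "(\<Sum>p\<in>E1 \<union> E2. qf {1..2*N} (Lij (fst p) (snd p)) x) = (\<Sum>p\<in>E1 \<union> E2. (x (fst p) - x (snd p))^2)"
    by (rule sum.cong[OF refl]) (subst qf_Lij, use hE in auto)
  finally show ?thesis .
qed

lemma qf_ones: "qf S ones_mat x = (\<Sum>a\<in>S. x a)^2"
  by (simp add: qf_def ones_mat_def power2_eq_square sum_product)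

lemma qf_id: "qf {1..n} id_mat x = (\<Sum>a\<in>{1..n}. (x a)^2)"
  unfolding qf_inner inner_id by (simp add: power2_eq_square)

lemma qf_add: "qf S (\<lambda>a b. A a b + B a b) x = qf S A x + qf S B x"
  by (simp add: qf_def algebra_simps sum.distrib)
lemma qf_diff: "qf S (\<lambda>a b. A a b - B a b) x = qf S A x - qf S B x"
  by (simp add: qf_def algebra_simps sum_subtractf)
lemma qf_scale: "qf S (\<lambda>a b. r * A a b) x = r * qf S A x"
  by (simp add: qf_def algebra_simps sum_distrib_left)


lemma primal_from_bound:
  assumes N1: "1 \<le> N" and fin: "finite (E1 \<union> E2)"
    and hE: "\<forall>p\<in>E1 \<union> E2. fst p \<in> {1..2*N} \<and> snd p \<in> {1..2*N}"
    and wnn: "\<forall>i\<in>{1..N}. 0 \<le> w i" and wsum: "(\<Sum>i\<in>{1..N}. w i) = c"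
    and bound: "\<forall>X\<in>Kset (2*N). lam \<le> inner_mat (2*N) X (Aw N E1 E2 w)"
  shows "primal_feasible N E1 E2 c w lam \<bar>lam\<bar>"
proof -
  let ?n = "2*N"
  let ?R = "{1..2*N}"
  let ?m = "real (2*N)"
  define M where "M = (\<lambda>a b. (\<Sum>i\<in>{1..N}. w i * Lij i (N + i) a b) + L0 E1 E2 a b
                        + \<bar>lam\<bar> * ones_mat a b - lam * id_mat a b)"
  have M_eq: "M = (\<lambda>a b. (Aw N E1 E2 w a b + \<bar>lam\<bar> * ones_mat a b) - lam * id_mat a b)"
    by (simp add: M_def Aw_def)
  have P_nn: "0 \<le> qf ?R (Aw N E1 E2 w) z" for z
    unfolding qf_Aw[OF fin hE] using wnn
    by (intro add_nonneg_nonneg sum_nonneg mult_nonneg_nonneg) auto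
  have symM: "M a b = M b a" for a b
  proof -
    have "(\<Sum>i\<in>{1..N}. w i * Lij i (N + i) a b) = (\<Sum>i\<in>{1..N}. w i * Lij i (N + i) b a)"
      by (rule sum.cong[OF refl]) (simp add: Lij_def)
    moreover have "L0 E1 E2 a b = L0 E1 E2 b a" by (rule L0_sym)
    moreover have "id_mat a b = id_mat b a" by (auto simp: id_mat_def)
    ultimately show ?thesis by (simp add: M_def ones_mat_def)
  qed
  have quad: "0 \<le> qf ?R M x" for x
  proof -
    define s where "s = (\<Sum>a\<in>?R. x a)"
    define ss where "ss = (\<Sum>a\<in>?R. (x a)^2)"
    define \<alpha> where "\<alpha> = s / ?m"
    define y where "y = (\<lambda>a. x a - \<alpha>)"
    define ssy where "ssy = (\<Sum>a\<in>?R. (y a)^2)"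
    have npos: "(0::real) < ?m" using N1 by simp
    have cardR: "card ?R = ?n" by simp
    have ys: "(\<Sum>a\<in>?R. y a) = 0"
      using npos by (simp add: y_def sum_subtractf s_def \<alpha>_def)
    have ssy_eq: "ssy = ss - s^2 / ?m"
    proof -
      have "ssy = (\<Sum>a\<in>?R. (x a)^2 - 2*\<alpha> * x a + \<alpha>^2)"
        unfolding ssy_def y_def by (rule sum.cong[OF refl]) (simp add: power2_eq_square algebra_simps)
      also have "\<dots> = ss - 2 * \<alpha> * s + real (2*N) * \<alpha>^2"
        by (simp add: sum.distrib sum_subtractf sum_distrib_left ss_def s_def)
      also have "\<dots> = ss - s^2 / ?m" using npos by (simp add: \<alpha>_def power2_eq_square field_simps)
      finally show ?thesis .
    qed
    have ssy_nn: "0 \<le> ssy" unfolding ssy_def by (simp add: sum_nonneg)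
    have Py: "lam * ssy \<le> qf ?R (Aw N E1 E2 w) y"
    proof (cases "ssy > 0")
      case True
      have "RK ?n y \<in> Kset ?n" using RK_in[where n="2*N" and y=y] ys True by (simp add: ssy_def)
      hence "lam \<le> inner_mat ?n (RK ?n y) (Aw N E1 E2 w)" using bound by blast
      also have "\<dots> = qf ?R (Aw N E1 E2 w) y / ssy" unfolding inner_RK ssy_def ..
      finally show ?thesis using True by (simp add: le_divide_eq)
    next
      case False
      hence "ssy = 0" using ssy_nn by simp
      thus ?thesis using P_nn[of y] by simp
    qed
    have Pxy: "qf ?R (Aw N E1 E2 w) y = qf ?R (Aw N E1 E2 w) x"
      unfolding qf_Aw[OF fin hE] by (simp add: y_def)
    have "qf ?R M x = qf ?R (Aw N E1 E2 w) x + \<bar>lam\<bar> * s^2 - lam * ss"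
      unfolding M_eq qf_diff qf_add qf_scale qf_ones qf_id s_def ss_def ..
    also have "\<dots> = qf ?R (Aw N E1 E2 w) y - lam * ssy + s^2 * (\<bar>lam\<bar> - lam / ?m)"
    proof -
      have sse: "ss = ssy + s^2 / ?m" using ssy_eq by simp
      show ?thesis unfolding sse using Pxy by (simp add: algebra_simps)
    qed
    finally have eq: "qf ?R M x = qf ?R (Aw N E1 E2 w) y - lam * ssy + s^2 * (\<bar>lam\<bar> - lam / ?m)" .
    have "lam / ?m \<le> \<bar>lam\<bar> / ?m" using npos by (simp add: divide_right_mono)
    also have "\<bar>lam\<bar> / ?m \<le> \<bar>lam\<bar>"
    proof -
      have "(1::real) \<le> ?m" using N1 by simp
      hence "\<bar>lam\<bar> * 1 \<le> \<bar>lam\<bar> * ?m" by (intro mult_left_mono) auto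
      thus ?thesis using npos by (simp add: divide_le_eq)
    qed
    finally have "0 \<le> s^2 * (\<bar>lam\<bar> - lam / ?m)" by simp
    thus ?thesis using eq Py by linarith
  qed
  have "psd ?n M" unfolding psd_def using symM quad by (simp add: qf_def)
  thus ?thesis using wnn wsum by (simp add: primal_feasible_def M_def)
qed

lemma Kne_lem:
  assumes "1 \<le> N"
  shows "Kset (2*N) \<noteq> {}"
proof -
  define y0 where "y0 a = delta 1 a - delta 2 a" for a
  have m1: "(1::nat) \<in> {1..2*N}" and m2: "(2::nat) \<in> {1..2*N}" using assms(1) by auto
  have d: "(\<Sum>a\<in>{1..2*N}. delta k a) = 1" if "k \<in> {1..2*N}" for k
    using that by (simp add: delta_def sum.delta)
  have s0: "(\<Sum>a\<in>{1..2*N}. y0 a) = 0"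
    unfolding y0_def sum_subtractf using d[OF m1] d[OF m2] by simp
  have sq: "(y0 a)^2 = delta 1 a + delta 2 a" for a by (simp add: y0_def delta_def)
  have "(\<Sum>a\<in>{1..2*N}. (y0 a)^2) = 2" unfolding sq sum.distrib using d[OF m1] d[OF m2] by simp
  hence "RK (2*N) y0 \<in> Kset (2*N)" using RK_in[where n="2*N" and y=y0] s0 by simp
  thus ?thesis by blast
qed

lemma E_facts:
  fixes N :: nat and E1 E2 :: "(nat \<times> nat) set"
  assumes "E1 \<subseteq> {(i, j). 1 \<le> i \<and> i < j \<and> j \<le> N}"
    and "E2 \<subseteq> {(i, j). N + 1 \<le> i \<and> i < j \<and> j \<le> 2 * N}"
  shows "finite (E1 \<union> E2)" "\<forall>p\<in>E1 \<union> E2. fst p \<in> {1..2*N} \<and> snd p \<in> {1..2*N}"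
proof -
  show h: "\<forall>p\<in>E1 \<union> E2. fst p \<in> {1..2*N} \<and> snd p \<in> {1..2*N}"
  proof
    fix p assume "p \<in> E1 \<union> E2"
    obtain a b where ab: "p = (a, b)" by (cases p)
    have "(1 \<le> a \<and> a < b \<and> b \<le> N) \<or> (N + 1 \<le> a \<and> a < b \<and> b \<le> 2 * N)"
      using \<open>p \<in> E1 \<union> E2\<close> assms unfolding ab by blast
    then show "fst p \<in> {1..2*N} \<and> snd p \<in> {1..2*N}" unfolding ab by auto
  qed
  have "E1 \<union> E2 \<subseteq> {1..2*N} \<times> {1..2*N}"
  proof
    fix p assume "p \<in> E1 \<union> E2"
    hence "fst p \<in> {1..2*N} \<and> snd p \<in> {1..2*N}" using h by blast
    thus "p \<in> {1..2*N} \<times> {1..2*N}" by (simp add: mem_Times_iff)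
  qed
  thus "finite (E1 \<union> E2)" by (rule finite_subset) simp
qed

lemma hG_lem:
  assumes "{1..N} \<noteq> {}"
  shows "\<exists>i\<in>{1..N}. Max ((\<lambda>i. inner_mat n X (Lij i (N+i))) ` {1..N}) = inner_mat n X (Lij i (N+i))"
proof -
  have "Max ((\<lambda>i. inner_mat n X (Lij i (N+i))) ` {1..N}) \<in> (\<lambda>i. inner_mat n X (Lij i (N+i))) ` {1..N}"
    using assms by (intro Max_in) auto
  thus ?thesis by auto
qed

lemma Max_ge_lem:
  "\<forall>i\<in>{1..N}. inner_mat n X (Lij i (N + i)) \<le> Max ((\<lambda>i. inner_mat n X (Lij i (N+i))) ` {1..N})"
  by (intro ballI Max_ge) auto

theorem proposition2:
  fixes N :: nat and E1 E2 :: "(nat \<times> nat) set" and c :: real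
  assumes "1 \<le> N" and "0 \<le> c"
    and "E1 \<subseteq> {(i, j). 1 \<le> i \<and> i < j \<and> j \<le> N}"
    and "E2 \<subseteq> {(i, j). N + 1 \<le> i \<and> i < j \<and> j \<le> 2 * N}"
  shows "\<exists>p :: real.
     (\<forall>w lam mu. primal_feasible N E1 E2 c w lam mu \<longrightarrow> lam \<le> p) \<and>
     (\<forall>\<epsilon>>0. \<exists>w lam mu. primal_feasible N E1 E2 c w lam mu \<and> p - \<epsilon> < lam) \<and>
     (\<exists>xi X. dual_feasible N xi X \<and> dual_obj N E1 E2 c xi X = - p) \<and>
     (\<forall>xi X. dual_feasible N xi X \<longrightarrow> dual_obj N E1 E2 c xi X \<le> - p)"
proof -
  let ?n = "2*N"
  let ?R = "{1..2*N}"
  define K where "K = Kset (2*N)"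
  have finE: "finite (E1 \<union> E2)" using E_facts(1)[OF assms(3,4)] .
  have hE: "\<forall>p\<in>E1 \<union> E2. fst p \<in> {1..2*N} \<and> snd p \<in> {1..2*N}" using E_facts(2)[OF assms(3,4)] .
  define G where "G i X = inner_mat ?n X (L0 E1 E2) + c * inner_mat ?n X (Lij i (N+i))" for i X
  define h where "h X = inner_mat ?n X (L0 E1 E2) + c * Max ((\<lambda>i. inner_mat ?n X (Lij i (N+i))) ` {1..N})" for X
  have Ine: "{1..N} \<noteq> {}" using assms(1) by simp
  have Kc: "compact K" unfolding K_def by (rule compact_Kset)
  have Kne: "K \<noteq> {}" unfolding K_def using Kne_lem[OF assms(1)] .
  have contI: "continuous_on K (\<lambda>X. inner_mat ?n X A)" for A by (rule cont_inner)
  have "continuous_on K h"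
  proof -
    have c1: "continuous_on K (\<lambda>X. Max ((\<lambda>i. inner_mat ?n X (Lij i (N+i))) ` {1..N}))"
      by (rule cont_Max[OF _ Ine]) (auto intro: cont_inner)
    show ?thesis unfolding h_def
      by (intro continuous_on_add continuous_on_mult continuous_on_const cont_inner c1)
  qed
  then obtain Xs where Xs: "Xs \<in> K" "\<forall>Y\<in>K. h Xs \<le> h Y"
    using continuous_attains_inf[OF Kc Kne] by blast
  define p where "p = h Xs"
  have hG: "\<exists>i\<in>{1..N}. h X = G i X" for X
  proof -
    obtain i where "i \<in> {1..N}" "Max ((\<lambda>i. inner_mat ?n X (Lij i (N+i))) ` {1..N}) = inner_mat ?n X (Lij i (N+i))"
      using hG_lem[OF Ine, of ?n X] by blast
    thus ?thesis unfolding h_def G_def by auto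
  qed
  have approx: "\<exists>w. primal_feasible N E1 E2 c w (p - \<epsilon>) \<bar>p - \<epsilon>\<bar>" if ep: "\<epsilon> > 0" for \<epsilon>
  proof -
    have "\<exists>a. (\<forall>i\<in>{1..N}. 0 \<le> a i) \<and> (\<Sum>i\<in>{1..N}. a i) = 1 \<and> (\<forall>X\<in>K. p - \<epsilon> \<le> (\<Sum>i\<in>{1..N}. a i * G i X))"
    proof (rule minimax_step[OF _ Kc Kne])
      show "finite {1..N}" by simp
    next
      fix X Y :: "nat \<Rightarrow> nat \<Rightarrow> real" and t :: real
      assume "X \<in> K" "Y \<in> K" "0 \<le> t" "t \<le> 1"
      thus "(\<lambda>a b. X a b + t * (Y a b - X a b)) \<in> K" unfolding K_def by (rule Kset_conv)
    next
      fix i and X Y :: "nat \<Rightarrow> nat \<Rightarrow> real" and t :: real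
      show "G i (\<lambda>a b. X a b + t * (Y a b - X a b)) = G i X + t * (G i Y - G i X)"
        unfolding G_def inner_conv by (simp add: algebra_simps)
    next
      fix i show "continuous_on K (G i)"
        unfolding G_def by (intro continuous_intros cont_inner)
    next
      fix X assume "X \<in> K"
      hence "p \<le> h X" using Xs(2) by (simp add: p_def)
      thus "\<exists>i\<in>{1..N}. p \<le> G i X" using hG[of X] by auto
    qed (rule ep)
    then obtain a where a: "\<forall>i\<in>{1..N}. 0 \<le> a i" "(\<Sum>i\<in>{1..N}. a i) = 1"
      "\<forall>X\<in>K. p - \<epsilon> \<le> (\<Sum>i\<in>{1..N}. a i * G i X)" by blast
    define w where "w i = c * a i" for i
    have wnn: "\<forall>i\<in>{1..N}. 0 \<le> w i" using a(1) assms(2) by (simp add: w_def)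
    have wsum: "(\<Sum>i\<in>{1..N}. w i) = c" using a(2) by (simp add: w_def sum_distrib_left[symmetric])
    have bound: "\<forall>X\<in>Kset (2*N). p - \<epsilon> \<le> inner_mat (2*N) X (Aw N E1 E2 w)"
    proof
      fix X assume "X \<in> Kset (2*N)"
      hence "p - \<epsilon> \<le> (\<Sum>i\<in>{1..N}. a i * G i X)" using a(3) by (simp add: K_def)
      also have "(\<Sum>i\<in>{1..N}. a i * G i X) = (\<Sum>i\<in>{1..N}. a i * inner_mat ?n X (L0 E1 E2)
          + w i * inner_mat ?n X (Lij i (N+i)))"
        by (rule sum.cong[OF refl]) (simp add: G_def w_def algebra_simps)
      also have "\<dots> = (\<Sum>i\<in>{1..N}. a i * inner_mat ?n X (L0 E1 E2))
          + (\<Sum>i\<in>{1..N}. w i * inner_mat ?n X (Lij i (N+i)))"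
        by (rule sum.distrib)
      also have "\<dots> = (\<Sum>i\<in>{1..N}. a i) * inner_mat ?n X (L0 E1 E2)
          + (\<Sum>i\<in>{1..N}. w i * inner_mat ?n X (Lij i (N+i)))"
        by (simp only: sum_distrib_right)
      also have "\<dots> = inner_mat (2*N) X (Aw N E1 E2 w)"
        using a(2) by (simp add: inner_Aw[OF finE] inner_L0[OF finE])
      finally show "p - \<epsilon> \<le> inner_mat (2*N) X (Aw N E1 E2 w)" .
    qed
    show ?thesis using primal_from_bound[OF assms(1) finE hE wnn wsum bound] by blast
  qed
  define xs where "xs = - Max ((\<lambda>i. inner_mat ?n Xs (Lij i (N+i))) ` {1..N})"
  have dfeas: "dual_feasible N xs Xs"
  proof -
    have "Xs \<in> Kset (2*N)" using Xs(1) by (simp add: K_def)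
    hence k: "inner_mat ?n Xs id_mat = 1" "inner_mat ?n Xs ones_mat = 0" "psd ?n Xs"
      by (auto simp: Kset_def)
    have "\<forall>i\<in>{1..N}. inner_mat ?n Xs (Lij i (N + i)) \<le> - xs"
    proof -
      have "\<forall>i\<in>{1..N}. inner_mat ?n Xs (Lij i (N + i)) \<le> Max ((\<lambda>i. inner_mat ?n Xs (Lij i (N+i))) ` {1..N})"
        by (rule Max_ge_lem)
      moreover have "- xs = Max ((\<lambda>i. inner_mat ?n Xs (Lij i (N+i))) ` {1..N})"
        unfolding xs_def by (rule minus_minus)
      ultimately show ?thesis by metis
    qed
    thus ?thesis using k by (simp add: dual_feasible_def)
  qed
  have dobj: "dual_obj N E1 E2 c xs Xs = - p"
    by (simp add: dual_obj_def xs_def p_def h_def)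
  have P1: "\<forall>w lam mu. primal_feasible N E1 E2 c w lam mu \<longrightarrow> lam \<le> p"
  proof (intro allI impI)
    fix w lam mu assume "primal_feasible N E1 E2 c w lam mu"
    from weak_duality[OF this dfeas] show "lam \<le> p" using dobj by simp
  qed
  have P2: "\<forall>\<epsilon>>0. \<exists>w lam mu. primal_feasible N E1 E2 c w lam mu \<and> p - \<epsilon> < lam"
  proof (intro allI impI)
    fix \<epsilon> :: real assume "\<epsilon> > 0"
    hence "\<epsilon>/2 > 0" by simp
    from approx[OF this] obtain w where "primal_feasible N E1 E2 c w (p - \<epsilon>/2) \<bar>p - \<epsilon>/2\<bar>" by blast
    moreover have "p - \<epsilon> < p - \<epsilon>/2" using \<open>\<epsilon> > 0\<close> by simp
    ultimately show "\<exists>w lam mu. primal_feasible N E1 E2 c w lam mu \<and> p - \<epsilon> < lam" by blast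
  qed
  have P3: "\<exists>xi X. dual_feasible N xi X \<and> dual_obj N E1 E2 c xi X = - p" using dfeas dobj by blast
  have P4: "\<forall>xi X. dual_feasible N xi X \<longrightarrow> dual_obj N E1 E2 c xi X \<le> - p"
  proof (intro allI impI)
    fix xi X assume df: "dual_feasible N xi X"
    show "dual_obj N E1 E2 c xi X \<le> - p"
    proof (rule ccontr)
      assume "\<not> dual_obj N E1 E2 c xi X \<le> - p"
      hence ep: "(dual_obj N E1 E2 c xi X + p) / 2 > 0" by simp
      from approx[OF ep] obtain w where
        "primal_feasible N E1 E2 c w (p - (dual_obj N E1 E2 c xi X + p) / 2) \<bar>p - (dual_obj N E1 E2 c xi X + p) / 2\<bar>" by blast
      from weak_duality[OF this df] ep show False by (simp add: field_simps)
    qed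
  qed
  show ?thesis using P1 P2 P3 P4 by blast
qed

end
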